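(* Let $A=\{(x_k,y_k):k\in[\ell]\}\subset\mathbb N^d$, $d=m+n$, where $\mathbb N$ denotes the non-negative integers, and let $T$ be any of the four sets $T_{\mathbb Q_\infty,V}(A)$, $T_{\mathbb Q_\infty,C}(A)$, $T_{\mathbb Q_{-\infty},V}(A)$, $T_{\mathbb Q_{-\infty},C}(A)$. Then for all $\bar k\in[\ell]$, $$\mathbb D_{\mathrm{in}}(x_{\bar k},y_{\bar k},T)\in\mathbb N\quad\text{and}\quad\mathbb D_{\mathrm{out}}(x_{\bar k},y_{\bar k},T)\in\mathbb N.$$
   Context: $[\ell]=\{1,\dots,\ell\}$; $1\!\!1$ denotes a vector of ones; $\vee,\wedge$ are componentwise max and min. Tropical technologies: $T_{\mathbb Q_\infty,V}(A)=\{(x,y)\in\mathbb{R}_+^d: x\ge\bigvee_k(t_k1\!\!1_m+x_k),\ y\le\bigvee_k(t_k1\!\!1_n+y_k),\ \max_k t_k=0,\ t\in(\mathbb{R}\cup\{-\infty\})^\ell\}$; $T_{\mathbb Q_\infty,C}(A)$: same without the constraint $\max_k t_k=0$; $T_{\mathbb Q_{-\infty},V}(A)=\{(x,y)\in\mathbb{R}_+^d: x\ge\bigwedge_k(t_k1\!\!1_m+x_k),\ y\le\bigwedge_k(t_k1\!\!1_n+y_k),\ \min_k t_k=0,\ t\in(\mathbb{R}\cup\{+\infty\})^\ell\}$; $T_{\mathbb Q_{-\infty},C}(A)$: same without the constraint $\min_k t_k=0$. Translation distance functions: $\mathbb D_{\mathrm{in}}(x,y,T)=\sup\{\delta\in\mathbb{R}:(x-\delta1\!\!1_m,y)\in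 T\}$, $\mathbb D_{\mathrm{out}}(x,y,T)=\sup\{\delta\in\mathbb{R}:(x,y+\delta1\!\!1_n)\in T\}$. *)

theory Defs
  imports "HOL-Library.Extended_Real"
begin

text \<open>Points of R^d = R^m x R^n are pairs of functions (x, y) :: (nat => real) x (nat => real);
  only the coordinates i < m of x and j < n of y are relevant.
  The data set A is given by X k, Y k for k in {1..l}.
  Tropical coefficient vectors t range over R \<union> {-\<infinity>} (resp. R \<union> {+\<infinity>}),
  encoded as ereal-valued functions excluding +\<infinity> (resp. -\<infinity>).\<close>

definition trop_max_tech :: "bool \<Rightarrow> nat \<Rightarrow> nat \<Rightarrow> nat \<Rightarrow> (nat \<Rightarrow> nat \<Rightarrow> real)
    \<Rightarrow> (nat \<Rightarrow> nat \<Rightarrow> real) \<Rightarrow> ((nat \<Rightarrow> real) \<times> (nat \<Rightarrow> real)) set" where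
  "trop_max_tech vrs m n l X Y =
    {(x, y). (\<forall>i<m. 0 \<le> x i) \<and> (\<forall>j<n. 0 \<le> y j) \<and>
      (\<exists>t :: nat \<Rightarrow> ereal. (\<forall>k\<in>{1..l}. t k \<noteq> \<infinity>) \<and>
         (vrs \<longrightarrow> (MAX k\<in>{1..l}. t k) = 0) \<and>
         (\<forall>i<m. (MAX k\<in>{1..l}. t k + ereal (X k i)) \<le> ereal (x i)) \<and>
         (\<forall>j<n. ereal (y j) \<le> (MAX k\<in>{1..l}. t k + ereal (Y k j))))}"

definition trop_min_tech :: "bool \<Rightarrow> nat \<Rightarrow> nat \<Rightarrow> nat \<Rightarrow> (nat \<Rightarrow> nat \<Rightarrow> real)
    \<Rightarrow> (nat \<Rightarrow> nat \<Rightarrow> real) \<Rightarrow> ((nat \<Rightarrow> real) \<times> (nat \<Rightarrow> real)) set" where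
  "trop_min_tech vrs m n l X Y =
    {(x, y). (\<forall>i<m. 0 \<le> x i) \<and> (\<forall>j<n. 0 \<le> y j) \<and>
      (\<exists>t :: nat \<Rightarrow> ereal. (\<forall>k\<in>{1..l}. t k \<noteq> -\<infinity>) \<and>
         (vrs \<longrightarrow> (MIN k\<in>{1..l}. t k) = 0) \<and>
         (\<forall>i<m. (MIN k\<in>{1..l}. t k + ereal (X k i)) \<le> ereal (x i)) \<and>
         (\<forall>j<n. ereal (y j) \<le> (MIN k\<in>{1..l}. t k + ereal (Y k j))))}"

abbreviation "T_max_V \<equiv> trop_max_tech True"
abbreviation "T_max_C \<equiv> trop_max_tech False"
abbreviation "T_min_V \<equiv> trop_min_tech True"
abbreviation "T_min_C \<equiv> trop_min_tech False"

definition D_in :: "((nat \<Rightarrow> real) \<times> (nat \<Rightarrow> real)) set \<Rightarrow> (nat \<Rightarrow> real) \<Rightarrow> (nat \<Rightarrow> real) \<Rightarrow> ereal" where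
  "D_in T x y = Sup {ereal \<delta> | \<delta>. ((\<lambda>i. x i - \<delta>), y) \<in> T}"

definition D_out :: "((nat \<Rightarrow> real) \<times> (nat \<Rightarrow> real)) set \<Rightarrow> (nat \<Rightarrow> real) \<Rightarrow> (nat \<Rightarrow> real) \<Rightarrow> ereal" where
  "D_out T x y = Sup {ereal \<delta> | \<delta>. (x, (\<lambda>j. y j + \<delta>)) \<in> T}"

end

theory Submission imports Defs begin

definition ef :: "ereal \<Rightarrow> ereal" where
  "ef a = (case a of ereal r \<Rightarrow> ereal (of_int \<lfloor>r\<rfloor>) | PInfty \<Rightarrow> \<infinity> | MInfty \<Rightarrow> -\<infinity>)"
definition ec :: "ereal \<Rightarrow> ereal" where
  "ec a = (case a of ereal r \<Rightarrow> ereal (of_int \<lceil>r\<rceil>) | PInfty \<Rightarrow> \<infinity> | MInfty \<Rightarrow> -\<infinity>)"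

lemma ef_simps[simp]: "ef (ereal r) = ereal (of_int \<lfloor>r\<rfloor>)" "ef \<infinity> = \<infinity>" "ef (-\<infinity>) = -\<infinity>"
  by (auto simp: ef_def)
lemma ec_simps[simp]: "ec (ereal r) = ereal (of_int \<lceil>r\<rceil>)" "ec \<infinity> = \<infinity>" "ec (-\<infinity>) = -\<infinity>"
  by (auto simp: ec_def)

lemma mono_ef: "mono ef"
proof
  fix a b :: ereal assume "a \<le> b" then show "ef a \<le> ef b"
    by (cases a; cases b) (auto simp: floor_mono)
qed
lemma mono_ec: "mono ec"
proof
  fix a b :: ereal assume "a \<le> b" then show "ec a \<le> ec b"
    by (cases a; cases b) (auto simp: ceiling_mono)
qed

lemma ef_add: "c \<in> \<int> \<Longrightarrow> ef (a + ereal c) = ef a + ereal c"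
  by (cases a) (auto elim!: Ints_cases simp: floor_add_int[symmetric])
lemma ec_add: "c \<in> \<int> \<Longrightarrow> ec (a + ereal c) = ec a + ereal c"
  by (cases a) (auto elim!: Ints_cases)

lemma ef_ne: "ef a = \<infinity> \<longleftrightarrow> a = \<infinity>" "ef a = -\<infinity> \<longleftrightarrow> a = -\<infinity>"
  by (cases a; auto)+
lemma ec_ne: "ec a = \<infinity> \<longleftrightarrow> a = \<infinity>" "ec a = -\<infinity> \<longleftrightarrow> a = -\<infinity>"
  by (cases a; auto)+

lemma Max_ef: "finite A \<Longrightarrow> A \<noteq> {} \<Longrightarrow> \<forall>k\<in>A. c k \<in> \<int> \<Longrightarrow>
   (MAX k\<in>A. ef (t k) + ereal (c k)) = ef (MAX k\<in>A. t k + ereal (c k))"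
proof -
  assume a: "finite A" "A \<noteq> {}" "\<forall>k\<in>A. c k \<in> \<int>"
  have "(MAX k\<in>A. ef (t k) + ereal (c k)) = Max (ef ` (\<lambda>k. t k + ereal (c k)) ` A)"
    unfolding image_image using a(3) by (simp add: ef_add cong: image_cong)
  also have "\<dots> = ef (MAX k\<in>A. t k + ereal (c k))"
    using a by (simp add: mono_Max_commute[OF mono_ef, symmetric])
  finally show ?thesis .
qed
lemma Max_ec: "finite A \<Longrightarrow> A \<noteq> {} \<Longrightarrow> \<forall>k\<in>A. c k \<in> \<int> \<Longrightarrow>
   (MAX k\<in>A. ec (t k) + ereal (c k)) = ec (MAX k\<in>A. t k + ereal (c k))"
proof -
  assume a: "finite A" "A \<noteq> {}" "\<forall>k\<in>A. c k \<in> \<int>"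
  have "(MAX k\<in>A. ec (t k) + ereal (c k)) = Max (ec ` (\<lambda>k. t k + ereal (c k)) ` A)"
    unfolding image_image using a(3) by (simp add: ec_add cong: image_cong)
  also have "\<dots> = ec (MAX k\<in>A. t k + ereal (c k))"
    using a by (simp add: mono_Max_commute[OF mono_ec, symmetric])
  finally show ?thesis .
qed
lemma Min_ef: "finite A \<Longrightarrow> A \<noteq> {} \<Longrightarrow> \<forall>k\<in>A. c k \<in> \<int> \<Longrightarrow>
   (MIN k\<in>A. ef (t k) + ereal (c k)) = ef (MIN k\<in>A. t k + ereal (c k))"
proof -
  assume a: "finite A" "A \<noteq> {}" "\<forall>k\<in>A. c k \<in> \<int>"
  have "(MIN k\<in>A. ef (t k) + ereal (c k)) = Min (ef ` (\<lambda>k. t k + ereal (c k)) ` A)"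
    unfolding image_image using a(3) by (simp add: ef_add cong: image_cong)
  also have "\<dots> = ef (MIN k\<in>A. t k + ereal (c k))"
    using a by (simp add: mono_Min_commute[OF mono_ef, symmetric])
  finally show ?thesis .
qed
lemma Min_ec: "finite A \<Longrightarrow> A \<noteq> {} \<Longrightarrow> \<forall>k\<in>A. c k \<in> \<int> \<Longrightarrow>
   (MIN k\<in>A. ec (t k) + ereal (c k)) = ec (MIN k\<in>A. t k + ereal (c k))"
proof -
  assume a: "finite A" "A \<noteq> {}" "\<forall>k\<in>A. c k \<in> \<int>"
  have "(MIN k\<in>A. ec (t k) + ereal (c k)) = Min (ec ` (\<lambda>k. t k + ereal (c k)) ` A)"
    unfolding image_image using a(3) by (simp add: ec_add cong: image_cong)
  also have "\<dots> = ec (MIN k\<in>A. t k + ereal (c k))"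
    using a by (simp add: mono_Min_commute[OF mono_ec, symmetric])
  finally show ?thesis .
qed

lemma Max_ef0: "finite A \<Longrightarrow> A \<noteq> {} \<Longrightarrow> (MAX k\<in>A. t k) = 0 \<Longrightarrow> (MAX k\<in>A. ef (t k)) = 0"
  using Max_ef[of A "\<lambda>_. 0" t] by (simp add: zero_ereal_def)
lemma Max_ec0: "finite A \<Longrightarrow> A \<noteq> {} \<Longrightarrow> (MAX k\<in>A. t k) = 0 \<Longrightarrow> (MAX k\<in>A. ec (t k)) = 0"
  using Max_ec[of A "\<lambda>_. 0" t] by (simp add: zero_ereal_def)
lemma Min_ef0: "finite A \<Longrightarrow> A \<noteq> {} \<Longrightarrow> (MIN k\<in>A. t k) = 0 \<Longrightarrow> (MIN k\<in>A. ef (t k)) = 0"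
  using Min_ef[of A "\<lambda>_. 0" t] by (simp add: zero_ereal_def)
lemma Min_ec0: "finite A \<Longrightarrow> A \<noteq> {} \<Longrightarrow> (MIN k\<in>A. t k) = 0 \<Longrightarrow> (MIN k\<in>A. ec (t k)) = 0"
  using Min_ec[of A "\<lambda>_. 0" t] by (simp add: zero_ereal_def)

lemma sup_int:
  fixes P :: "real \<Rightarrow> bool"
  assumes "P 0" "\<And>d. P d \<Longrightarrow> d \<le> B" "\<And>d. P d \<Longrightarrow> P (of_int \<lceil>d\<rceil>)"
  shows "\<exists>N::nat. Sup {ereal d | d. P d} = ereal (real N)"
proof -
  define Z where "Z = {z::int. 0 \<le> z \<and> P (of_int z)}"
  have fin: "finite Z"
  proof (rule finite_subset)
    show "Z \<subseteq> {0..\<lceil>B\<rceil>}" using assms(2) by (auto simp: Z_def) (metis ceiling_mono ceiling_of_int)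
  qed simp
  have "0 \<in> Z" using assms(1) by (simp add: Z_def)
  hence ne: "Z \<noteq> {}" by auto
  define M where "M = Max Z"
  have MZ: "M \<in> Z" using fin ne by (simp add: M_def)
  hence M0: "0 \<le> M" by (simp add: Z_def)
  have "Sup {ereal d | d. P d} = ereal (of_int M)"
  proof (rule Sup_eqI)
    fix y assume "y \<in> {ereal d | d. P d}"
    then obtain d where d: "y = ereal d" "P d" by auto
    show "y \<le> ereal (of_int M)"
    proof (cases "0 \<le> \<lceil>d\<rceil>")
      case True
      hence "\<lceil>d\<rceil> \<in> Z" using assms(3)[OF d(2)] by (simp add: Z_def)
      hence "\<lceil>d\<rceil> \<le> M" using fin by (simp add: M_def)
      hence "d \<le> of_int M" by (meson ceiling_le_iff)
      thus ?thesis using d by simp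
    next
      case False
      hence "d \<le> 0" by linarith
      thus ?thesis using d M0 by simp
    qed
  next
    fix y assume "\<And>z. z \<in> {ereal d | d. P d} \<Longrightarrow> z \<le> y"
    moreover have "ereal (of_int M) \<in> {ereal d | d. P d}" using MZ by (auto simp: Z_def)
    ultimately show "ereal (of_int M) \<le> y" by blast
  qed
  moreover have "real_of_int M = real (nat M)" using M0 by simp
  ultimately show ?thesis by metis
qed


lemma Max_ind: "finite A \<Longrightarrow> kb \<in> A \<Longrightarrow>
   (MAX k\<in>A. (if k = kb then 0 else -\<infinity>) + ereal (c k)) = ereal (c kb)"
  by (rule Max_eqI) auto
lemma Min_ind: "finite A \<Longrightarrow> kb \<in> A \<Longrightarrow>
   (MIN k\<in>A. (if k = kb then 0 else \<infinity>) + ereal (c k)) = ereal (c kb)"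
  by (rule Min_eqI) auto
lemma Max_ind0: "finite A \<Longrightarrow> kb \<in> A \<Longrightarrow>
   (MAX k\<in>A. (if k = kb then 0 else -\<infinity>::ereal)) = 0"
  by (rule Max_eqI) auto
lemma Min_ind0: "finite A \<Longrightarrow> kb \<in> A \<Longrightarrow>
   (MIN k\<in>A. (if k = kb then 0 else \<infinity>::ereal)) = 0"
  by (rule Min_eqI) auto

lemma nat_nonneg: "(x::real) \<in> \<nat> \<Longrightarrow> 0 \<le> x"
  by (auto elim: Nats_cases)
lemma nat_int: "(x::real) \<in> \<nat> \<Longrightarrow> x \<in> \<int>"
  using Nats_subset_Ints by blast

lemma din_max:
  assumes m: "m \<ge> 1" and X: "\<forall>k\<in>{1..l}. \<forall>i<m. X k i \<in> \<nat>"
    and Y: "\<forall>k\<in>{1..l}. \<forall>j<n. Y k j \<in> \<nat>" and kb: "kb \<in> {1..l}"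
  shows "\<exists>N::nat. D_in (trop_max_tech vrs m n l X Y) (X kb) (Y kb) = ereal (real N)"
  unfolding D_in_def
proof (rule sup_int[where B = "X kb 0"])
  let ?t = "\<lambda>k. if k = kb then 0 else -\<infinity> :: ereal"
  show "((\<lambda>i. X kb i - 0), Y kb) \<in> trop_max_tech vrs m n l X Y"
  proof -
    have a: "(MAX k\<in>{1..l}. ?t k) = 0" by (rule Max_ind0) (use kb in auto)
    have b: "\<And>c. (MAX k\<in>{1..l}. ?t k + ereal (c k)) = ereal (c kb)" by (rule Max_ind) (use kb in auto)
    have c: "\<forall>k\<in>{1..l}. ?t k \<noteq> \<infinity>" by simp
    show ?thesis unfolding trop_max_tech_def mem_Collect_eq case_prod_conv
      apply (intro conjI exI[of _ ?t])
      apply (simp_all only: a b c)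
      using kb X Y by (auto simp: nat_nonneg)
  qed
next
  fix d assume "((\<lambda>i. X kb i - d), Y kb) \<in> trop_max_tech vrs m n l X Y"
  then show "d \<le> X kb 0" using m unfolding trop_max_tech_def by auto
next
  fix d assume "((\<lambda>i. X kb i - d), Y kb) \<in> trop_max_tech vrs m n l X Y"
  then obtain t where nn: "\<forall>i<m. 0 \<le> X kb i - d" and t1: "\<forall>k\<in>{1..l}. t k \<noteq> \<infinity>"
    and t2: "vrs \<longrightarrow> (MAX k\<in>{1..l}. t k) = 0"
    and t3: "\<forall>i<m. (MAX k\<in>{1..l}. t k + ereal (X k i)) \<le> ereal (X kb i - d)"
    and t4: "\<forall>j<n. ereal (Y kb j) \<le> (MAX k\<in>{1..l}. t k + ereal (Y k j))"
    and yn: "\<forall>j<n. 0 \<le> Y kb j"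
    unfolding trop_max_tech_def by auto
  have ne: "{1..l} \<noteq> {}" using kb by auto
  have xi: "\<And>i. i < m \<Longrightarrow> \<forall>k\<in>{1..l}. X k i \<in> \<int>" using X nat_int by blast
  have yi: "\<And>j. j < n \<Longrightarrow> \<forall>k\<in>{1..l}. Y k j \<in> \<int>" using Y nat_int by blast
  have xkb: "\<And>i. i < m \<Longrightarrow> X kb i \<in> \<int>" using xi kb by blast
  have ykb: "\<And>j. j < n \<Longrightarrow> Y kb j \<in> \<int>" using yi kb by blast
  show "((\<lambda>i. X kb i - real_of_int \<lceil>d\<rceil>), Y kb) \<in> trop_max_tech vrs m n l X Y"
    unfolding trop_max_tech_def
  proof (unfold mem_Collect_eq case_prod_conv, intro conjI exI[of _ "\<lambda>k. ef (t k)"])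
    show "\<forall>i<m. 0 \<le> X kb i - real_of_int \<lceil>d\<rceil>"
    proof (intro allI impI)
      fix i assume i: "i < m"
      then obtain z where "X kb i = of_int z" using xkb Ints_cases by metis
      moreover have "d \<le> X kb i" using nn i by auto
      ultimately show "0 \<le> X kb i - real_of_int \<lceil>d\<rceil>" by (simp add: ceiling_le_iff)
    qed
    show "\<forall>j<n. 0 \<le> Y kb j" by fact
    show "\<forall>k\<in>{1..l}. ef (t k) \<noteq> \<infinity>" using t1 by (simp add: ef_ne)
    show "vrs \<longrightarrow> (MAX k\<in>{1..l}. ef (t k)) = 0" using t2 ne Max_ef0 by blast
    show "\<forall>i<m. (MAX k\<in>{1..l}. ef (t k) + ereal (X k i)) \<le> ereal (X kb i - real_of_int \<lceil>d\<rceil>)"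
    proof (intro allI impI)
      fix i assume i: "i < m"
      then obtain z where z: "X kb i = of_int z" using xkb Ints_cases by metis
      have "(MAX k\<in>{1..l}. ef (t k) + ereal (X k i)) = ef (MAX k\<in>{1..l}. t k + ereal (X k i))"
        using Max_ef[OF _ ne xi[OF i]] by simp
      also have "\<dots> \<le> ef (ereal (X kb i - d))" using t3 i mono_ef by (meson monoD)
      also have "\<dots> = ereal (X kb i - real_of_int \<lceil>d\<rceil>)" using z
        by simp (metis ceiling_diff_of_int floor_minus minus_diff_eq of_int_diff)
      finally show "(MAX k\<in>{1..l}. ef (t k) + ereal (X k i)) \<le> ereal (X kb i - real_of_int \<lceil>d\<rceil>)" .
    qed
    show "\<forall>j<n. ereal (Y kb j) \<le> (MAX k\<in>{1..l}. ef (t k) + ereal (Y k j))"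
    proof (intro allI impI)
      fix j assume j: "j < n"
      then obtain z where z: "Y kb j = of_int z" using ykb Ints_cases by metis
      have "ereal (Y kb j) = ef (ereal (Y kb j))" using z by simp
      also have "\<dots> \<le> ef (MAX k\<in>{1..l}. t k + ereal (Y k j))" using t4 j mono_ef by (meson monoD)
      also have "\<dots> = (MAX k\<in>{1..l}. ef (t k) + ereal (Y k j))"
        using Max_ef[OF _ ne yi[OF j]] by simp
      finally show "ereal (Y kb j) \<le> (MAX k\<in>{1..l}. ef (t k) + ereal (Y k j))" .
    qed
  qed
qed


lemma dout_max:
  assumes m: "m \<ge> 1" and n: "n \<ge> 1" and X: "\<forall>k\<in>{1..l}. \<forall>i<m. X k i \<in> \<nat>"
    and Y: "\<forall>k\<in>{1..l}. \<forall>j<n. Y k j \<in> \<nat>" and kb: "kb \<in> {1..l}"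
  shows "\<exists>N::nat. D_out (trop_max_tech vrs m n l X Y) (X kb) (Y kb) = ereal (real N)"
  unfolding D_out_def
proof (rule sup_int[where B = "X kb 0 + (\<Sum>k\<in>{1..l}. Y k 0)"])
  let ?t = "\<lambda>k. if k = kb then 0 else -\<infinity> :: ereal"
  show "(X kb, (\<lambda>j. Y kb j + 0)) \<in> trop_max_tech vrs m n l X Y"
  proof -
    have a: "(MAX k\<in>{1..l}. ?t k) = 0" by (rule Max_ind0) (use kb in auto)
    have b: "\<And>c. (MAX k\<in>{1..l}. ?t k + ereal (c k)) = ereal (c kb)" by (rule Max_ind) (use kb in auto)
    have c: "\<forall>k\<in>{1..l}. ?t k \<noteq> \<infinity>" by simp
    show ?thesis unfolding trop_max_tech_def mem_Collect_eq case_prod_conv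
      apply (intro conjI exI[of _ ?t])
      apply (simp_all only: a b c)
      using kb X Y by (auto simp: nat_nonneg)
  qed
next
  have ne: "{1..l} \<noteq> {}" using kb by auto
  fix d assume "(X kb, (\<lambda>j. Y kb j + d)) \<in> trop_max_tech vrs m n l X Y"
  then obtain t where t3: "\<forall>i<m. (MAX k\<in>{1..l}. t k + ereal (X k i)) \<le> ereal (X kb i)"
    and t4: "\<forall>j<n. ereal (Y kb j + d) \<le> (MAX k\<in>{1..l}. t k + ereal (Y k j))"
    and t1: "\<forall>k\<in>{1..l}. t k \<noteq> \<infinity>"
    unfolding trop_max_tech_def by auto
  have "(MAX k\<in>{1..l}. t k + ereal (Y k 0)) \<in> (\<lambda>k. t k + ereal (Y k 0)) ` {1..l}"
    by (rule Max_in) (use ne in auto)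
  then obtain k0 where k0: "k0 \<in> {1..l}" "(MAX k\<in>{1..l}. t k + ereal (Y k 0)) = t k0 + ereal (Y k0 0)"
    by auto
  have h1: "ereal (Y kb 0 + d) \<le> t k0 + ereal (Y k0 0)" using t4 n k0 by auto
  have h2: "t k0 + ereal (X k0 0) \<le> ereal (X kb 0)"
  proof -
    have "t k0 + ereal (X k0 0) \<le> (MAX k\<in>{1..l}. t k + ereal (X k 0))" by (rule Max_ge) (use k0 in auto)
    also have "\<dots> \<le> ereal (X kb 0)" using t3 m by auto
    finally show ?thesis .
  qed
  have "d \<le> X kb 0 + Y k0 0 - Y kb 0 - X k0 0"
  proof (cases "t k0")
    case (real r) then show ?thesis using h1 h2 by simp
  next
    case PInf then show ?thesis using t1 k0 by simp
  next
    case MInf then show ?thesis using h1 by simp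
  qed
  moreover have "0 \<le> Y kb 0" "0 \<le> X k0 0" using kb k0 X Y m n by (auto simp: nat_nonneg)
  moreover have "Y k0 0 \<le> (\<Sum>k\<in>{1..l}. Y k 0)"
    using k0 Y n by (intro member_le_sum) (auto simp: nat_nonneg)
  ultimately show "d \<le> X kb 0 + (\<Sum>k\<in>{1..l}. Y k 0)" by linarith
next
  fix d assume "(X kb, (\<lambda>j. Y kb j + d)) \<in> trop_max_tech vrs m n l X Y"
  then obtain t where nn: "\<forall>j<n. 0 \<le> Y kb j + d" and t1: "\<forall>k\<in>{1..l}. t k \<noteq> \<infinity>"
    and t2: "vrs \<longrightarrow> (MAX k\<in>{1..l}. t k) = 0"
    and t3: "\<forall>i<m. (MAX k\<in>{1..l}. t k + ereal (X k i)) \<le> ereal (X kb i)"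
    and t4: "\<forall>j<n. ereal (Y kb j + d) \<le> (MAX k\<in>{1..l}. t k + ereal (Y k j))"
    and xn: "\<forall>i<m. 0 \<le> X kb i"
    unfolding trop_max_tech_def by auto
  have ne: "{1..l} \<noteq> {}" using kb by auto
  have xi: "\<And>i. i < m \<Longrightarrow> \<forall>k\<in>{1..l}. X k i \<in> \<int>" using X nat_int by blast
  have yi: "\<And>j. j < n \<Longrightarrow> \<forall>k\<in>{1..l}. Y k j \<in> \<int>" using Y nat_int by blast
  have xkb: "\<And>i. i < m \<Longrightarrow> X kb i \<in> \<int>" using xi kb by blast
  have ykb: "\<And>j. j < n \<Longrightarrow> Y kb j \<in> \<int>" using yi kb by blast
  show "(X kb, (\<lambda>j. Y kb j + real_of_int \<lceil>d\<rceil>)) \<in> trop_max_tech vrs m n l X Y"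
    unfolding trop_max_tech_def
  proof (unfold mem_Collect_eq case_prod_conv, intro conjI exI[of _ "\<lambda>k. ec (t k)"])
    show "\<forall>j<n. 0 \<le> Y kb j + real_of_int \<lceil>d\<rceil>"
      using nn by (meson add_left_mono le_of_int_ceiling order_trans)
    show "\<forall>i<m. 0 \<le> X kb i" by fact
    show "\<forall>k\<in>{1..l}. ec (t k) \<noteq> \<infinity>" using t1 by (simp add: ec_ne)
    show "vrs \<longrightarrow> (MAX k\<in>{1..l}. ec (t k)) = 0" using t2 ne Max_ec0 by blast
    show "\<forall>i<m. (MAX k\<in>{1..l}. ec (t k) + ereal (X k i)) \<le> ereal (X kb i)"
    proof (intro allI impI)
      fix i assume i: "i < m"
      then obtain z where z: "X kb i = of_int z" using xkb Ints_cases by metis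
      have "(MAX k\<in>{1..l}. ec (t k) + ereal (X k i)) = ec (MAX k\<in>{1..l}. t k + ereal (X k i))"
        using Max_ec[OF _ ne xi[OF i]] by simp
      also have "\<dots> \<le> ec (ereal (X kb i))" using t3 i mono_ec by (meson monoD)
      also have "\<dots> = ereal (X kb i)" using z by simp
      finally show "(MAX k\<in>{1..l}. ec (t k) + ereal (X k i)) \<le> ereal (X kb i)" .
    qed
    show "\<forall>j<n. ereal (Y kb j + real_of_int \<lceil>d\<rceil>) \<le> (MAX k\<in>{1..l}. ec (t k) + ereal (Y k j))"
    proof (intro allI impI)
      fix j assume j: "j < n"
      then obtain z where z: "Y kb j = of_int z" using ykb Ints_cases by metis
      have c: "\<lceil>Y kb j + d\<rceil> = \<lceil>d\<rceil> + z" unfolding z using ceiling_add_of_int[of d z]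
        by (simp only: add.commute)
      have "ereal (Y kb j + real_of_int \<lceil>d\<rceil>) = ec (ereal (Y kb j + d))"
        by (simp only: ec_simps c) (simp add: z)
      also have "\<dots> \<le> ec (MAX k\<in>{1..l}. t k + ereal (Y k j))" using t4 j mono_ec by (meson monoD)
      also have "\<dots> = (MAX k\<in>{1..l}. ec (t k) + ereal (Y k j))"
        using Max_ec[OF _ ne yi[OF j]] by simp
      finally show "ereal (Y kb j + real_of_int \<lceil>d\<rceil>) \<le> (MAX k\<in>{1..l}. ec (t k) + ereal (Y k j))" .
    qed
  qed
qed


lemma din_min:
  assumes m: "m \<ge> 1" and X: "\<forall>k\<in>{1..l}. \<forall>i<m. X k i \<in> \<nat>"
    and Y: "\<forall>k\<in>{1..l}. \<forall>j<n. Y k j \<in> \<nat>" and kb: "kb \<in> {1..l}"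
  shows "\<exists>N::nat. D_in (trop_min_tech vrs m n l X Y) (X kb) (Y kb) = ereal (real N)"
  unfolding D_in_def
proof (rule sup_int[where B = "X kb 0"])
  let ?t = "\<lambda>k. if k = kb then 0 else \<infinity> :: ereal"
  show "((\<lambda>i. X kb i - 0), Y kb) \<in> trop_min_tech vrs m n l X Y"
  proof -
    have a: "(MIN k\<in>{1..l}. ?t k) = 0" by (rule Min_ind0) (use kb in auto)
    have b: "\<And>c. (MIN k\<in>{1..l}. ?t k + ereal (c k)) = ereal (c kb)" by (rule Min_ind) (use kb in auto)
    have c: "\<forall>k\<in>{1..l}. ?t k \<noteq> -\<infinity>" by simp
    show ?thesis unfolding trop_min_tech_def mem_Collect_eq case_prod_conv
      apply (intro conjI exI[of _ ?t])
      apply (simp_all only: a b c)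
      using kb X Y by (auto simp: nat_nonneg)
  qed
next
  fix d assume "((\<lambda>i. X kb i - d), Y kb) \<in> trop_min_tech vrs m n l X Y"
  then show "d \<le> X kb 0" using m unfolding trop_min_tech_def by auto
next
  fix d assume "((\<lambda>i. X kb i - d), Y kb) \<in> trop_min_tech vrs m n l X Y"
  then obtain t where nn: "\<forall>i<m. 0 \<le> X kb i - d" and t1: "\<forall>k\<in>{1..l}. t k \<noteq> -\<infinity>"
    and t2: "vrs \<longrightarrow> (MIN k\<in>{1..l}. t k) = 0"
    and t3: "\<forall>i<m. (MIN k\<in>{1..l}. t k + ereal (X k i)) \<le> ereal (X kb i - d)"
    and t4: "\<forall>j<n. ereal (Y kb j) \<le> (MIN k\<in>{1..l}. t k + ereal (Y k j))"
    and yn: "\<forall>j<n. 0 \<le> Y kb j"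
    unfolding trop_min_tech_def by auto
  have ne: "{1..l} \<noteq> {}" using kb by auto
  have xi: "\<And>i. i < m \<Longrightarrow> \<forall>k\<in>{1..l}. X k i \<in> \<int>" using X nat_int by blast
  have yi: "\<And>j. j < n \<Longrightarrow> \<forall>k\<in>{1..l}. Y k j \<in> \<int>" using Y nat_int by blast
  have xkb: "\<And>i. i < m \<Longrightarrow> X kb i \<in> \<int>" using xi kb by blast
  have ykb: "\<And>j. j < n \<Longrightarrow> Y kb j \<in> \<int>" using yi kb by blast
  show "((\<lambda>i. X kb i - real_of_int \<lceil>d\<rceil>), Y kb) \<in> trop_min_tech vrs m n l X Y"
    unfolding trop_min_tech_def
  proof (unfold mem_Collect_eq case_prod_conv, intro conjI exI[of _ "\<lambda>k. ef (t k)"])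
    show "\<forall>i<m. 0 \<le> X kb i - real_of_int \<lceil>d\<rceil>"
    proof (intro allI impI)
      fix i assume i: "i < m"
      then obtain z where "X kb i = of_int z" using xkb Ints_cases by metis
      moreover have "d \<le> X kb i" using nn i by auto
      ultimately show "0 \<le> X kb i - real_of_int \<lceil>d\<rceil>" by (simp add: ceiling_le_iff)
    qed
    show "\<forall>j<n. 0 \<le> Y kb j" by fact
    show "\<forall>k\<in>{1..l}. ef (t k) \<noteq> -\<infinity>" using t1 by (simp add: ef_ne)
    show "vrs \<longrightarrow> (MIN k\<in>{1..l}. ef (t k)) = 0" using t2 ne Min_ef0 by blast
    show "\<forall>i<m. (MIN k\<in>{1..l}. ef (t k) + ereal (X k i)) \<le> ereal (X kb i - real_of_int \<lceil>d\<rceil>)"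
    proof (intro allI impI)
      fix i assume i: "i < m"
      then obtain z where z: "X kb i = of_int z" using xkb Ints_cases by metis
      have "(MIN k\<in>{1..l}. ef (t k) + ereal (X k i)) = ef (MIN k\<in>{1..l}. t k + ereal (X k i))"
        using Min_ef[OF _ ne xi[OF i]] by simp
      also have "\<dots> \<le> ef (ereal (X kb i - d))" using t3 i mono_ef by (meson monoD)
      also have "\<dots> = ereal (X kb i - real_of_int \<lceil>d\<rceil>)" using z
        by simp (metis ceiling_diff_of_int floor_minus minus_diff_eq of_int_diff)
      finally show "(MIN k\<in>{1..l}. ef (t k) + ereal (X k i)) \<le> ereal (X kb i - real_of_int \<lceil>d\<rceil>)" .
    qed
    show "\<forall>j<n. ereal (Y kb j) \<le> (MIN k\<in>{1..l}. ef (t k) + ereal (Y k j))"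
    proof (intro allI impI)
      fix j assume j: "j < n"
      then obtain z where z: "Y kb j = of_int z" using ykb Ints_cases by metis
      have "ereal (Y kb j) = ef (ereal (Y kb j))" using z by simp
      also have "\<dots> \<le> ef (MIN k\<in>{1..l}. t k + ereal (Y k j))" using t4 j mono_ef by (meson monoD)
      also have "\<dots> = (MIN k\<in>{1..l}. ef (t k) + ereal (Y k j))"
        using Min_ef[OF _ ne yi[OF j]] by simp
      finally show "ereal (Y kb j) \<le> (MIN k\<in>{1..l}. ef (t k) + ereal (Y k j))" .
    qed
  qed
qed

lemma dout_min:
  assumes m: "m \<ge> 1" and n: "n \<ge> 1" and X: "\<forall>k\<in>{1..l}. \<forall>i<m. X k i \<in> \<nat>"
    and Y: "\<forall>k\<in>{1..l}. \<forall>j<n. Y k j \<in> \<nat>" and kb: "kb \<in> {1..l}"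
  shows "\<exists>N::nat. D_out (trop_min_tech vrs m n l X Y) (X kb) (Y kb) = ereal (real N)"
  unfolding D_out_def
proof (rule sup_int[where B = "X kb 0 + (\<Sum>k\<in>{1..l}. Y k 0)"])
  let ?t = "\<lambda>k. if k = kb then 0 else \<infinity> :: ereal"
  show "(X kb, (\<lambda>j. Y kb j + 0)) \<in> trop_min_tech vrs m n l X Y"
  proof -
    have a: "(MIN k\<in>{1..l}. ?t k) = 0" by (rule Min_ind0) (use kb in auto)
    have b: "\<And>c. (MIN k\<in>{1..l}. ?t k + ereal (c k)) = ereal (c kb)" by (rule Min_ind) (use kb in auto)
    have c: "\<forall>k\<in>{1..l}. ?t k \<noteq> -\<infinity>" by simp
    show ?thesis unfolding trop_min_tech_def mem_Collect_eq case_prod_conv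
      apply (intro conjI exI[of _ ?t])
      apply (simp_all only: a b c)
      using kb X Y by (auto simp: nat_nonneg)
  qed
next
  have ne: "{1..l} \<noteq> {}" using kb by auto
  fix d assume "(X kb, (\<lambda>j. Y kb j + d)) \<in> trop_min_tech vrs m n l X Y"
  then obtain t where t3: "\<forall>i<m. (MIN k\<in>{1..l}. t k + ereal (X k i)) \<le> ereal (X kb i)"
    and t4: "\<forall>j<n. ereal (Y kb j + d) \<le> (MIN k\<in>{1..l}. t k + ereal (Y k j))"
    and t1: "\<forall>k\<in>{1..l}. t k \<noteq> -\<infinity>"
    unfolding trop_min_tech_def by auto
  have "(MIN k\<in>{1..l}. t k + ereal (X k 0)) \<in> (\<lambda>k. t k + ereal (X k 0)) ` {1..l}"
    by (rule Min_in) (use ne in auto)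
  then obtain k0 where k0: "k0 \<in> {1..l}" "(MIN k\<in>{1..l}. t k + ereal (X k 0)) = t k0 + ereal (X k0 0)"
    by auto
  have h2: "t k0 + ereal (X k0 0) \<le> ereal (X kb 0)" using t3 m k0 by auto
  have h1: "ereal (Y kb 0 + d) \<le> t k0 + ereal (Y k0 0)"
  proof -
    have "ereal (Y kb 0 + d) \<le> (MIN k\<in>{1..l}. t k + ereal (Y k 0))" using t4 n by auto
    also have "\<dots> \<le> t k0 + ereal (Y k0 0)" by (rule Min_le) (use k0 in auto)
    finally show ?thesis .
  qed
  have "d \<le> X kb 0 + Y k0 0 - Y kb 0 - X k0 0"
  proof (cases "t k0")
    case (real r) then show ?thesis using h1 h2 by simp
  next
    case PInf then show ?thesis using h2 by simp
  next
    case MInf then show ?thesis using t1 k0 by simp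
  qed
  moreover have "0 \<le> Y kb 0" "0 \<le> X k0 0" using kb k0 X Y m n by (auto simp: nat_nonneg)
  moreover have "Y k0 0 \<le> (\<Sum>k\<in>{1..l}. Y k 0)"
    using k0 Y n by (intro member_le_sum) (auto simp: nat_nonneg)
  ultimately show "d \<le> X kb 0 + (\<Sum>k\<in>{1..l}. Y k 0)" by linarith
next
  fix d assume "(X kb, (\<lambda>j. Y kb j + d)) \<in> trop_min_tech vrs m n l X Y"
  then obtain t where nn: "\<forall>j<n. 0 \<le> Y kb j + d" and t1: "\<forall>k\<in>{1..l}. t k \<noteq> -\<infinity>"
    and t2: "vrs \<longrightarrow> (MIN k\<in>{1..l}. t k) = 0"
    and t3: "\<forall>i<m. (MIN k\<in>{1..l}. t k + ereal (X k i)) \<le> ereal (X kb i)"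
    and t4: "\<forall>j<n. ereal (Y kb j + d) \<le> (MIN k\<in>{1..l}. t k + ereal (Y k j))"
    and xn: "\<forall>i<m. 0 \<le> X kb i"
    unfolding trop_min_tech_def by auto
  have ne: "{1..l} \<noteq> {}" using kb by auto
  have xi: "\<And>i. i < m \<Longrightarrow> \<forall>k\<in>{1..l}. X k i \<in> \<int>" using X nat_int by blast
  have yi: "\<And>j. j < n \<Longrightarrow> \<forall>k\<in>{1..l}. Y k j \<in> \<int>" using Y nat_int by blast
  have xkb: "\<And>i. i < m \<Longrightarrow> X kb i \<in> \<int>" using xi kb by blast
  have ykb: "\<And>j. j < n \<Longrightarrow> Y kb j \<in> \<int>" using yi kb by blast
  show "(X kb, (\<lambda>j. Y kb j + real_of_int \<lceil>d\<rceil>)) \<in> trop_min_tech vrs m n l X Y"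
    unfolding trop_min_tech_def
  proof (unfold mem_Collect_eq case_prod_conv, intro conjI exI[of _ "\<lambda>k. ec (t k)"])
    show "\<forall>j<n. 0 \<le> Y kb j + real_of_int \<lceil>d\<rceil>"
      using nn by (meson add_left_mono le_of_int_ceiling order_trans)
    show "\<forall>i<m. 0 \<le> X kb i" by fact
    show "\<forall>k\<in>{1..l}. ec (t k) \<noteq> -\<infinity>" using t1 by (simp add: ec_ne)
    show "vrs \<longrightarrow> (MIN k\<in>{1..l}. ec (t k)) = 0" using t2 ne Min_ec0 by blast
    show "\<forall>i<m. (MIN k\<in>{1..l}. ec (t k) + ereal (X k i)) \<le> ereal (X kb i)"
    proof (intro allI impI)
      fix i assume i: "i < m"
      then obtain z where z: "X kb i = of_int z" using xkb Ints_cases by metis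
      have "(MIN k\<in>{1..l}. ec (t k) + ereal (X k i)) = ec (MIN k\<in>{1..l}. t k + ereal (X k i))"
        using Min_ec[OF _ ne xi[OF i]] by simp
      also have "\<dots> \<le> ec (ereal (X kb i))" using t3 i mono_ec by (meson monoD)
      also have "\<dots> = ereal (X kb i)" using z by simp
      finally show "(MIN k\<in>{1..l}. ec (t k) + ereal (X k i)) \<le> ereal (X kb i)" .
    qed
    show "\<forall>j<n. ereal (Y kb j + real_of_int \<lceil>d\<rceil>) \<le> (MIN k\<in>{1..l}. ec (t k) + ereal (Y k j))"
    proof (intro allI impI)
      fix j assume j: "j < n"
      then obtain z where z: "Y kb j = of_int z" using ykb Ints_cases by metis
      have c: "\<lceil>Y kb j + d\<rceil> = \<lceil>d\<rceil> + z" unfolding z using ceiling_add_of_int[of d z]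
        by (simp only: add.commute)
      have "ereal (Y kb j + real_of_int \<lceil>d\<rceil>) = ec (ereal (Y kb j + d))"
        by (simp only: ec_simps c) (simp add: z)
      also have "\<dots> \<le> ec (MIN k\<in>{1..l}. t k + ereal (Y k j))" using t4 j mono_ec by (meson monoD)
      also have "\<dots> = (MIN k\<in>{1..l}. ec (t k) + ereal (Y k j))"
        using Min_ec[OF _ ne yi[OF j]] by simp
      finally show "ereal (Y kb j + real_of_int \<lceil>d\<rceil>) \<le> (MIN k\<in>{1..l}. ec (t k) + ereal (Y k j))" .
    qed
  qed
qed

theorem mainTheorem6:
  fixes m n l kb :: nat and X Y :: "nat \<Rightarrow> nat \<Rightarrow> real"
    and T :: "((nat \<Rightarrow> real) \<times> (nat \<Rightarrow> real)) set"
  assumes "m \<ge> 1" and "n \<ge> 1"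
    and "\<forall>k\<in>{1..l}. \<forall>i<m. X k i \<in> \<nat>"
    and "\<forall>k\<in>{1..l}. \<forall>j<n. Y k j \<in> \<nat>"
    and "T \<in> {T_max_V m n l X Y, T_max_C m n l X Y, T_min_V m n l X Y, T_min_C m n l X Y}"
    and "kb \<in> {1..l}"
  shows "(\<exists>N::nat. D_in T (X kb) (Y kb) = ereal (real N)) \<and>
         (\<exists>N::nat. D_out T (X kb) (Y kb) = ereal (real N))"
  using assms(5) din_max[OF assms(1,3,4,6)] dout_max[OF assms(1,2,3,4,6)]
    din_min[OF assms(1,3,4,6)] dout_min[OF assms(1,2,3,4,6)]
  by auto

end
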